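(* Let $k$ be a field of characteristic $0$, $R=k[x_1,\dots,x_n]$, $\ell=x_1+\dots+x_n$, let $d_1,\dots,d_n$ be positive integers such that $I=(x_1^{d_1},\dots,x_{n-1}^{d_{n-1}},x_n^2,\ell^{d_n})$ is minimally generated by these elements, and let $G=(x_1^{d_1},\dots,x_{n-1}^{d_{n-1}},x_n^2)\colon(\ell^{d_n})$. If $t=\sum_{i=1}^n(d_i-1)$ is odd, then $I\colon(x_n)=I+(x_n)$ and $G\colon(x_n)=G+(x_n)$; equivalently, the sequences $$0\to R/(I+(x_n))(-1)\xrightarrow{\cdot x_n}R/I\to R/(I+(x_n))\to0,\qquad 0\to R/(G+(x_n))(-1)\xrightarrow{\cdot x_n}R/G\to R/(G+(x_n))\to0$$ are exact. *)

theory Defs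
  imports Main "HOL-Library.Poly_Mapping"
begin

text \<open>Multivariate polynomials over 'a: finitely supported maps from monomials
(exponent vectors nat =>0 nat) to coefficients.\<close>

type_synonym 'a mpoly = "(nat \<Rightarrow>\<^sub>0 nat) \<Rightarrow>\<^sub>0 'a"

definition polyR :: "nat \<Rightarrow> ('a::comm_ring_1) mpoly set" where
  "polyR n = {p. \<forall>m \<in> Poly_Mapping.keys p. Poly_Mapping.keys m \<subseteq> {1..n}}"

definition var :: "nat \<Rightarrow> ('a::comm_ring_1) mpoly" where
  "var i = Poly_Mapping.single (Poly_Mapping.single i 1) 1"

definition ideal_gen :: "nat \<Rightarrow> ('a::comm_ring_1) mpoly set \<Rightarrow> 'a mpoly set" where
  "ideal_gen n S = {p. \<exists>c. (\<forall>g\<in>S. c g \<in> polyR n) \<and> p = (\<Sum>g\<in>S. c g * g)}"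

definition ideal_colon :: "nat \<Rightarrow> ('a::comm_ring_1) mpoly set \<Rightarrow> 'a mpoly \<Rightarrow> 'a mpoly set" where
  "ideal_colon n I f = {p \<in> polyR n. p * f \<in> I}"

definition ideal_plus :: "('a::comm_ring_1) mpoly set \<Rightarrow> 'a mpoly set \<Rightarrow> 'a mpoly set" where
  "ideal_plus I J = {a + b | a b. a \<in> I \<and> b \<in> J}"

definition minimally_generated :: "nat \<Rightarrow> ('a::comm_ring_1) mpoly list \<Rightarrow> bool" where
  "minimally_generated n gs \<longleftrightarrow>
     (\<forall>j < length gs. gs ! j \<notin> ideal_gen n {gs ! i | i. i < length gs \<and> i \<noteq> j})"

end

theory Submission
  imports Defs "HOL-Library.FuncSet"
begin


abbreviation lk where "lk \<equiv> Poly_Mapping.lookup"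
abbreviation sg where "sg \<equiv> Poly_Mapping.single"
abbreviation ks where "ks \<equiv> Poly_Mapping.keys"

lemma lk_sub_add_single:
  fixes a :: "nat \<Rightarrow>\<^sub>0 nat"
  shows "lk (a - sg i 1 + sg j 1) k = lk a k - (if k = i then 1 else 0) + (if k = j then 1 else 0)"
  by (simp add: lookup_add lookup_minus lookup_single when_def)


definition lin :: "(('b \<Rightarrow> 'a::field) \<Rightarrow> ('b \<Rightarrow> 'a)) \<Rightarrow> bool" where
  "lin T \<longleftrightarrow> (\<forall>c g. T (\<lambda>a. c * g a) = (\<lambda>a. c * T g a)) \<and> (\<forall>g h. T (\<lambda>a. g a + h a) = (\<lambda>a. T g a + T h a))"

lemma lin_smult: "lin T \<Longrightarrow> T (\<lambda>a. c * g a) = (\<lambda>a. c * T g a)"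
  unfolding lin_def by blast

lemma lin_add: "lin T \<Longrightarrow> T (\<lambda>a. g a + h a) = (\<lambda>a. T g a + T h a)"
  unfolding lin_def by blast

lemma lin_zero: "lin T \<Longrightarrow> T (\<lambda>a. 0) = (\<lambda>a. 0)"
  using lin_smult[of T 0 "\<lambda>a. 0"] by simp

lemma lin_diff: "lin T \<Longrightarrow> T (\<lambda>a. g a - h a) = (\<lambda>a. T g a - T h a)"
proof -
  assume L: "lin T"
  have "T (\<lambda>a. g a - h a) = T (\<lambda>a. g a + (\<lambda>a. (-1) * h a) a)" by simp
  also have "\<dots> = (\<lambda>a. T g a + T (\<lambda>a. (-1) * h a) a)" by (rule lin_add[OF L])
  also have "\<dots> = (\<lambda>a. T g a + (-1) * T h a)" by (simp only: lin_smult[OF L])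
  finally show ?thesis by simp
qed

lemma lin_sum: assumes "finite X" "lin T" shows "T (\<lambda>a. \<Sum>x\<in>X. f x a) = (\<lambda>a. \<Sum>x\<in>X. T (f x) a)"
  using assms(1)
proof (induction X rule: finite_induct)
  case empty then show ?case using lin_zero[OF assms(2)] by simp
next
  case (insert x F)
  then show ?case using lin_add[OF assms(2), of "f x" "\<lambda>a. \<Sum>x\<in>F. f x a"] by simp
qed

lemma lin_pow: "lin T \<Longrightarrow> lin (T ^^ k)"
proof (induction k)
  case 0 then show ?case by (simp add: lin_def)
next
  case (Suc k)
  then have L: "lin (T ^^ k)" by simp
  show ?case unfolding lin_def using lin_smult[OF L] lin_add[OF L] lin_smult[OF Suc.prems] lin_add[OF Suc.prems]
    by simp
qed

lemma pow_zero: "lin T \<Longrightarrow> (T ^^ k) (\<lambda>a. 0) = (\<lambda>a. 0)"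
  using lin_zero lin_pow by blast

locale box =
  fixes V :: "nat set" and e :: "nat \<Rightarrow> nat"
  assumes finV: "finite V" and epos: "\<forall>i\<in>V. 1 \<le> e i"
begin

definition inB :: "(nat \<Rightarrow>\<^sub>0 nat) \<Rightarrow> bool" where
  "inB a \<longleftrightarrow> ks a \<subseteq> V \<and> (\<forall>i\<in>V. lk a i < e i)"

definition deg :: "(nat \<Rightarrow>\<^sub>0 nat) \<Rightarrow> nat" where
  "deg a = (\<Sum>i\<in>V. lk a i)"

definition s :: nat where "s = (\<Sum>i\<in>V. e i - 1)"

definition E :: "((nat \<Rightarrow>\<^sub>0 nat) \<Rightarrow> 'a::field_char_0) \<Rightarrow> ((nat \<Rightarrow>\<^sub>0 nat) \<Rightarrow> 'a)" where
  "E g = (\<lambda>a. if inB a then (\<Sum>i\<in>{i\<in>V. 0 < lk a i}. g (a - sg i 1)) else 0)"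

definition cf :: "(nat \<Rightarrow>\<^sub>0 nat) \<Rightarrow> nat \<Rightarrow> nat" where
  "cf a j = (lk a j + 1) * (e j - lk a j - 1)"

definition F :: "((nat \<Rightarrow>\<^sub>0 nat) \<Rightarrow> 'a::field_char_0) \<Rightarrow> ((nat \<Rightarrow>\<^sub>0 nat) \<Rightarrow> 'a)" where
  "F g = (\<lambda>a. if inB a then (\<Sum>j\<in>V. of_nat (cf a j) * g (a + sg j 1)) else 0)"

definition hom :: "nat \<Rightarrow> ((nat \<Rightarrow>\<^sub>0 nat) \<Rightarrow> 'a::field_char_0) \<Rightarrow> bool" where
  "hom q g \<longleftrightarrow> (\<forall>a. (\<not> inB a \<or> deg a \<noteq> q) \<longrightarrow> g a = 0)"

lemma inB_sub:
  assumes "inB a" "i \<in> V" "0 < lk a i"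
  shows "inB (a - sg i 1)" "deg (a - sg i 1) = deg a - 1" "1 \<le> deg a"
proof -
  have k: "ks (a - sg i 1) \<subseteq> ks a"
    by (auto simp: in_keys_iff lookup_minus)
  show "inB (a - sg i 1)" using assms k unfolding inB_def
    by (auto simp: lookup_minus lookup_single when_def)
  have "deg a = (\<Sum>j\<in>V. lk (a - sg i 1) j + (if j = i then 1 else 0))"
    unfolding deg_def using assms by (intro sum.cong) (auto simp: lookup_minus lookup_single when_def)
  also have "\<dots> = deg (a - sg i 1) + 1"
    using assms finV by (simp add: sum.distrib deg_def)
  finally show "deg (a - sg i 1) = deg a - 1" "1 \<le> deg a" by auto
qed

lemma inB_add:
  assumes "inB a" "j \<in> V" "lk a j + 1 < e j"
  shows "inB (a + sg j 1)" "deg (a + sg j 1) = deg a + 1"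
proof -
  have k: "ks (a + sg j 1) \<subseteq> ks a \<union> {j}"
    by (auto simp: in_keys_iff lookup_add lookup_single when_def split: if_splits)
  show "inB (a + sg j 1)" using assms k unfolding inB_def
    by (auto simp: lookup_add lookup_single when_def)
  have "deg (a + sg j 1) = (\<Sum>i\<in>V. lk a i + (if i = j then 1 else 0))"
    unfolding deg_def using assms by (intro sum.cong) (auto simp: lookup_add lookup_single when_def)
  also have "\<dots> = deg a + 1"
    using assms finV by (simp add: sum.distrib deg_def)
  finally show "deg (a + sg j 1) = deg a + 1" .
qed

lemma deg_le_s: "inB a \<Longrightarrow> deg a \<le> s"
  unfolding deg_def s_def inB_def by (intro sum_mono) (auto simp: less_Suc_eq_le[symmetric]) 

lemma cf_zero: "inB a \<Longrightarrow> j \<in> V \<Longrightarrow> \<not> inB (a + sg j 1) \<Longrightarrow> cf a j = 0"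
  using inB_add(1)[of a j] unfolding cf_def by fastforce

lemma hom_zero_above: "hom q g \<Longrightarrow> s < q \<Longrightarrow> g = (\<lambda>a. 0)"
  unfolding hom_def using deg_le_s by fastforce

lemma hom_E: assumes "hom q g" shows "hom (Suc q) (E g)"
  unfolding hom_def
proof (intro allI impI)
  fix a assume H: "\<not> inB a \<or> deg a \<noteq> Suc q"
  show "E g a = 0"
  proof (cases "inB a")
    case True
    have "g (a - sg i 1) = 0" if "i \<in> V" "0 < lk a i" for i
      using inB_sub[OF True that] H True assms unfolding hom_def by auto
    then show ?thesis unfolding E_def by (auto intro!: sum.neutral)
  qed (simp add: E_def)
qed

lemma hom_F: assumes "hom (Suc q) g" shows "hom q (F g)"
  unfolding hom_def
proof (intro allI impI)
  fix a assume H: "\<not> inB a \<or> deg a \<noteq> q"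
  show "F g a = 0"
  proof (cases "inB a")
    case True
    have "of_nat (cf a j) * g (a + sg j 1) = 0" if "j \<in> V" for j
    proof (cases "lk a j + 1 < e j")
      case True': True
      then show ?thesis using inB_add[OF True that True'] H True assms unfolding hom_def by auto
    qed (auto simp: cf_def)
    then show ?thesis unfolding F_def by (auto intro!: sum.neutral)
  qed (simp add: F_def)
qed

lemma hom_F0: assumes "hom 0 g" shows "F g = (\<lambda>a. 0)"
proof
  fix a
  show "F g a = 0"
  proof (cases "inB a")
    case True
    have "of_nat (cf a j) * g (a + sg j 1) = 0" if "j \<in> V" for j
    proof (cases "lk a j + 1 < e j")
      case True': True
      then show ?thesis using inB_add[OF True that True'] True assms unfolding hom_def by auto
    qed (auto simp: cf_def)
    then show ?thesis unfolding F_def by (auto intro!: sum.neutral)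
  qed (simp add: F_def)
qed


lemma sum_split_at:
  assumes "finite A" "i \<in> A"
  shows "(\<Sum>j\<in>A. h j) = h i + (\<Sum>j\<in>A. if j = i then 0 else h j)"
proof -
  have "(\<Sum>j\<in>A. h j) = (\<Sum>j\<in>A. (if j = i then h j else 0) + (if j = i then 0 else h j))"
    by (intro sum.cong) auto
  also have "\<dots> = h i + (\<Sum>j\<in>A. if j = i then 0 else h j)"
    using assms by (simp add: sum.distrib)
  finally show ?thesis .
qed

lemma pm_swap: "0 < lk a i \<Longrightarrow> (a::nat\<Rightarrow>\<^sub>0nat) - sg i 1 + sg j 1 = a + sg j 1 - sg i 1"
  by (rule poly_mapping_eqI) (auto simp: lookup_add lookup_minus lookup_single when_def)

lemma pm_back: "0 < lk a i \<Longrightarrow> (a::nat\<Rightarrow>\<^sub>0nat) - sg i 1 + sg i 1 = a"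
  by (rule poly_mapping_eqI) (auto simp: lookup_add lookup_minus lookup_single when_def)

lemma pm_back2: "(a::nat\<Rightarrow>\<^sub>0nat) + sg i 1 - sg i 1 = a"
  by (rule poly_mapping_eqI) (simp add: lookup_add lookup_minus lookup_single when_def)

lemma cf_sub_other: "j \<noteq> i \<Longrightarrow> cf (a - sg i 1) j = cf a j"
  by (simp add: cf_def lookup_minus lookup_single when_def)

lemma cf_sub_same: "0 < lk a i \<Longrightarrow> cf (a - sg i 1) i = lk a i * (e i - lk a i)"
  by (simp add: cf_def lookup_minus lookup_single when_def)

lemma comm:
  assumes aB: "inB a"
  shows "E (F g) a = F (E g) a + of_int (2 * int (deg a) - int s) * g a"
proof -
  define P where "P = {i\<in>V. 0 < lk a i}"
  have finP: "finite P" using finV by (simp add: P_def)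
  define off where "off = (\<Sum>i\<in>P. \<Sum>j\<in>V. if j = i then 0 else of_nat (cf a j) * g (a + sg j 1 - sg i 1))"
  have EF: "E (F g) a = (\<Sum>i\<in>P. of_nat (lk a i * (e i - lk a i))) * g a + off"
  proof -
    have "E (F g) a = (\<Sum>i\<in>P. F g (a - sg i 1))"
      using aB by (simp add: E_def P_def)
    also have "\<dots> = (\<Sum>i\<in>P. of_nat (lk a i * (e i - lk a i)) * g a +
        (\<Sum>j\<in>V. if j = i then 0 else of_nat (cf a j) * g (a + sg j 1 - sg i 1)))"
    proof (intro sum.cong refl)
      fix i assume iP: "i \<in> P"
      then have iV: "i \<in> V" and ai: "0 < lk a i" by (auto simp: P_def)
      have "F g (a - sg i 1) = (\<Sum>j\<in>V. of_nat (cf (a - sg i 1) j) * g (a - sg i 1 + sg j 1))"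
        using inB_sub(1)[OF aB iV ai] by (simp add: F_def)
      also have "\<dots> = of_nat (cf (a - sg i 1) i) * g (a - sg i 1 + sg i 1) +
         (\<Sum>j\<in>V. if j = i then 0 else of_nat (cf (a - sg i 1) j) * g (a - sg i 1 + sg j 1))"
        by (rule sum_split_at[OF finV iV])
      also have "\<dots> = of_nat (lk a i * (e i - lk a i)) * g a +
        (\<Sum>j\<in>V. if j = i then 0 else of_nat (cf a j) * g (a + sg j 1 - sg i 1))"
      proof -
        have 1: "of_nat (cf (a - sg i 1) i) * g (a - sg i 1 + sg i 1) = of_nat (lk a i * (e i - lk a i)) * g a"
          by (simp only: cf_sub_same[OF ai] pm_back[OF ai])
        have 2: "(\<Sum>j\<in>V. if j = i then 0 else of_nat (cf (a - sg i 1) j) * g (a - sg i 1 + sg j 1)) =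
          (\<Sum>j\<in>V. if j = i then 0 else of_nat (cf a j) * g (a + sg j 1 - sg i 1))"
        proof (rule sum.cong[OF refl])
          fix j show "(if j = i then 0 else of_nat (cf (a - sg i 1) j) * g (a - sg i 1 + sg j 1)) =
            (if j = i then 0 else of_nat (cf a j) * g (a + sg j 1 - sg i 1))"
            by (cases "j = i") (simp_all add: cf_sub_other pm_swap[OF ai] del: One_nat_def)
        qed
        show ?thesis by (simp only: 1 2)
      qed
      finally show "F g (a - sg i 1) = \<dots>" .
    qed
    also have "\<dots> = (\<Sum>i\<in>P. of_nat (lk a i * (e i - lk a i))) * g a + off"
      by (simp add: sum.distrib sum_distrib_right off_def)
    finally show ?thesis .
  qed
  have FE: "F (E g) a = (\<Sum>j\<in>V. of_nat (cf a j)) * g a + off"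
  proof -
    have "F (E g) a = (\<Sum>j\<in>V. of_nat (cf a j) * E g (a + sg j 1))"
      using aB by (simp add: F_def)
    also have "\<dots> = (\<Sum>j\<in>V. of_nat (cf a j) * g a +
        (\<Sum>i\<in>P. if j = i then 0 else of_nat (cf a j) * g (a + sg j 1 - sg i 1)))"
    proof (intro sum.cong refl)
      fix j assume jV: "j \<in> V"
      show "of_nat (cf a j) * E g (a + sg j 1) = of_nat (cf a j) * g a +
        (\<Sum>i\<in>P. if j = i then 0 else of_nat (cf a j) * g (a + sg j 1 - sg i 1))"
      proof (cases "lk a j + 1 < e j")
        case False
        then have "cf a j = 0" by (simp add: cf_def)
        then show ?thesis by (simp add: sum.neutral)
      next
        case True
        have B1: "inB (a + sg j 1)" by (rule inB_add(1)[OF aB jV True])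
        have Pj: "{i\<in>V. 0 < lk (a + sg j 1) i} = insert j P"
          using jV by (auto simp: P_def lookup_add lookup_single when_def)
        have "E g (a + sg j 1) = (\<Sum>i\<in>insert j P. g (a + sg j 1 - sg i 1))"
          using B1 Pj by (simp add: E_def)
        also have "\<dots> = g a + (\<Sum>i\<in>P - {j}. g (a + sg j 1 - sg i 1))"
          using finP by (simp add: sum.insert_remove pm_back2)
        also have "(\<Sum>i\<in>P - {j}. g (a + sg j 1 - sg i 1)) = (\<Sum>i\<in>P. if j = i then 0 else g (a + sg j 1 - sg i 1))"
          using finP by (simp add: sum.If_cases Diff_eq Int_commute)
        finally have "E g (a + sg j 1) = g a + (\<Sum>i\<in>P. if j = i then 0 else g (a + sg j 1 - sg i 1))" .
        then show ?thesis by (simp add: distrib_left sum_distrib_left if_distrib cong: if_cong)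
      qed
    qed
    also have "\<dots> = (\<Sum>j\<in>V. of_nat (cf a j)) * g a +
        (\<Sum>j\<in>V. \<Sum>i\<in>P. if j = i then 0 else of_nat (cf a j) * g (a + sg j 1 - sg i 1))"
      by (simp add: sum.distrib sum_distrib_right)
    also have "(\<Sum>j\<in>V. \<Sum>i\<in>P. if j = i then 0 else of_nat (cf a j) * g (a + sg j 1 - sg i 1)) = off"
      unfolding off_def by (rule sum.swap)
    finally show ?thesis .
  qed
  have diag: "(\<Sum>i\<in>P. of_nat (lk a i * (e i - lk a i))) - (\<Sum>j\<in>V. of_nat (cf a j))
      = (of_int (2 * int (deg a) - int s) :: 'a)"
  proof -
    have "(\<Sum>i\<in>P. of_nat (lk a i * (e i - lk a i))) = (\<Sum>i\<in>V. (of_nat (lk a i * (e i - lk a i)) :: 'a))"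
      unfolding P_def using finV by (intro sum.mono_neutral_left) auto
    moreover have "int (lk a i * (e i - lk a i)) - int (cf a i) = 2 * int (lk a i) - int (e i - 1)"
      if "i \<in> V" for i
    proof -
      from aB that have "lk a i < e i" by (auto simp: inB_def)
      then obtain t where "e i = lk a i + 1 + t" by (metis add_Suc_right less_iff_Suc_add add.commute plus_1_eq_Suc)
      then show ?thesis by (simp add: cf_def algebra_simps)
    qed
    then have "(\<Sum>i\<in>V. int (lk a i * (e i - lk a i)) - int (cf a i)) = (\<Sum>i\<in>V. 2 * int (lk a i) - int (e i - 1))"
      by (intro sum.cong) auto
    then have "(\<Sum>i\<in>V. int (lk a i * (e i - lk a i))) - (\<Sum>i\<in>V. int (cf a i)) = 2 * int (deg a) - int s"
      by (simp add: sum_subtractf deg_def s_def sum_distrib_left)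
    then have "(of_int ((\<Sum>i\<in>V. int (lk a i * (e i - lk a i))) - (\<Sum>i\<in>V. int (cf a i))) :: 'a)
       = of_int (2 * int (deg a) - int s)" by simp
    ultimately show ?thesis by simp
  qed
  have "E (F g) a - F (E g) a = ((\<Sum>i\<in>P. of_nat (lk a i * (e i - lk a i))) - (\<Sum>j\<in>V. of_nat (cf a j))) * g a"
    using EF FE by (simp add: left_diff_distrib)
  then have "E (F g) a - F (E g) a = of_int (2 * int (deg a) - int s) * g a" by (simp only: diag)
  then show ?thesis by (metis diff_add_cancel add.commute)
qed


lemma lin_E: "lin E"
  unfolding lin_def E_def by (simp add: fun_eq_iff sum_distrib_left sum.distrib)

lemma lin_F: "lin F"
  unfolding lin_def F_def by (simp add: fun_eq_iff sum_distrib_left sum.distrib distrib_left mult.left_commute)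

lemma E_zero[simp]: "E (\<lambda>a. 0) = (\<lambda>a. 0)" by (rule lin_zero[OF lin_E])
lemma F_zero[simp]: "F (\<lambda>a. 0) = (\<lambda>a. 0)" by (rule lin_zero[OF lin_F])
lemma Epow_zero[simp]: "(E ^^ k) (\<lambda>a. 0) = (\<lambda>a. 0)" by (rule pow_zero[OF lin_E])
lemma Fpow_zero[simp]: "(F ^^ k) (\<lambda>a. 0) = (\<lambda>a. 0)" by (rule pow_zero[OF lin_F])

lemma hom_Epow: "hom q g \<Longrightarrow> hom (q + k) ((E ^^ k) g)"
proof (induction k)
  case 0 then show ?case by simp
next
  case (Suc k)
  then have "hom (Suc (q + k)) (E ((E ^^ k) g))" using hom_E by blast
  then show ?case by simp
qed

lemma hom_Fpow: "hom q g \<Longrightarrow> k \<le> q \<Longrightarrow> hom (q - k) ((F ^^ k) g)"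
proof (induction k)
  case 0 then show ?case by simp
next
  case (Suc k)
  then have h: "hom (q - k) ((F ^^ k) g)" by simp
  have "q - k = Suc (q - Suc k)" using Suc.prems by simp
  then have "hom (Suc (q - Suc k)) ((F ^^ k) g)" using h by simp
  then have "hom (q - Suc k) (F ((F ^^ k) g))" by (rule hom_F)
  then show ?case by simp
qed

lemma Fpow_vanish: "hom q g \<Longrightarrow> q < k \<Longrightarrow> (F ^^ k) g = (\<lambda>a. 0)"
proof -
  assume h: "hom q g" and qk: "q < k"
  have "hom 0 ((F ^^ q) g)" using hom_Fpow[OF h, of q] by simp
  then have z: "(F ^^ Suc q) g = (\<lambda>a. 0)" using hom_F0 by simp
  obtain r where "k = Suc (q + r)" using qk less_imp_Suc_add by blast
  then have r: "k = r + Suc q" by simp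
  have "(F ^^ k) g = (F ^^ r) ((F ^^ Suc q) g)" by (simp only: r funpow_add comp_apply)
  then show ?thesis using z by simp
qed

lemma comm_hom:
  assumes "hom p g"
  shows "E (F g) = (\<lambda>a. F (E g) a + of_int (2 * int p - int s) * g a)"
proof
  fix a
  show "E (F g) a = F (E g) a + of_int (2 * int p - int s) * g a"
  proof (cases "inB a")
    case True
    show ?thesis
    proof (cases "deg a = p")
      case True2: True
      then show ?thesis using comm[OF True, of g] by simp
    next
      case False
      then have "g a = 0" using assms True unfolding hom_def by auto
      then show ?thesis using comm[OF True, of g] by simp
    qed
  next
    case False
    then show ?thesis using assms unfolding hom_def E_def F_def by simp
  qed
qed

lemma comm_Fpow:
  assumes "hom p u"
  shows "E (F ((F ^^ j) u)) = (\<lambda>a. F (E ((F ^^ j) u)) a + of_int (2 * int p - int s - 2 * int j) * (F ^^ j) u a)"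
proof (cases "j \<le> p")
  case True
  have "int (p - j) = int p - int j" using True by simp
  then show ?thesis using comm_hom[OF hom_Fpow[OF assms True]] by (simp add: algebra_simps)
next
  case False
  then have "(F ^^ j) u = (\<lambda>a. 0)" using Fpow_vanish[OF assms] by simp
  then show ?thesis by simp
qed

lemma comb_of_int: "(of_int A * y + of_int B * y :: 'c::ring_1) = of_int (A + B) * y"
  by (simp add: distrib_right)

lemma hw_id: "int (Suc j) * (\<nu> - int j) + (\<nu> - 2 * int (Suc j)) = int (Suc (Suc j)) * (\<nu> - int (Suc j))"
  by (simp add: algebra_simps)

lemma HW:
  assumes "hom p u" "E u = (\<lambda>a. 0)"
  shows "E ((F ^^ Suc j) u) = (\<lambda>a. of_int (int (Suc j) * ((2 * int p - int s) - int j)) * (F ^^ j) u a)"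
proof (induction j)
  case 0
  show ?case using comm_hom[OF assms(1)] assms(2) by simp
next
  case (Suc j)
  define \<nu> where "\<nu> = 2 * int p - int s"
  have "E ((F ^^ Suc (Suc j)) u) = E (F ((F ^^ Suc j) u))" by simp
  also have "\<dots> = (\<lambda>a. F (E ((F ^^ Suc j) u)) a + of_int (2 * int p - int s - 2 * int (Suc j)) * (F ^^ Suc j) u a)"
    by (rule comm_Fpow[OF assms(1)])
  also have "\<dots> = (\<lambda>a. of_int (int (Suc j) * (\<nu> - int j)) * F ((F ^^ j) u) a + of_int (\<nu> - 2 * int (Suc j)) * (F ^^ Suc j) u a)"
    unfolding Suc.IH lin_smult[OF lin_F] \<nu>_def by simp
  also have "\<dots> = (\<lambda>a. of_int (int (Suc (Suc j)) * (\<nu> - int (Suc j))) * (F ^^ Suc j) u a)"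
    by (simp only: funpow.simps comp_apply comb_of_int hw_id)
  finally show ?case unfolding \<nu>_def .
qed

definition cc :: "int \<Rightarrow> nat \<Rightarrow> nat \<Rightarrow> int" where
  "cc \<nu> m k = (\<Prod>t<k. int (m + t + 1) * (\<nu> - int (m + t)))"

lemma cc_Suc: "cc \<nu> m (Suc k) = cc \<nu> m k * (int (Suc (m + k)) * (\<nu> - int (m + k)))"
  by (simp add: cc_def)

lemma cc_pos: "int (m + k) \<le> \<nu> \<Longrightarrow> cc \<nu> m k \<noteq> 0"
  unfolding cc_def by (auto simp: prod_zero_iff)

lemma EF_pow:
  assumes "hom p u" "E u = (\<lambda>a. 0)"
  shows "(E ^^ k) ((F ^^ (m + k)) u) = (\<lambda>a. of_int (cc (2 * int p - int s) m k) * (F ^^ m) u a)"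
proof (induction k)
  case 0 then show ?case by (simp add: cc_def)
next
  case (Suc k)
  define \<nu> where "\<nu> = 2 * int p - int s"
  have "(E ^^ Suc k) ((F ^^ (m + Suc k)) u) = (E ^^ k) (E ((F ^^ Suc (m + k)) u))"
    by (simp add: funpow_Suc_right del: funpow.simps)
  also have "\<dots> = (E ^^ k) (\<lambda>a. of_int (int (Suc (m + k)) * (\<nu> - int (m + k))) * (F ^^ (m + k)) u a)"
    unfolding \<nu>_def by (rule arg_cong[where f="E ^^ k"], rule HW[OF assms])
  also have "\<dots> = (\<lambda>a. of_int (int (Suc (m + k)) * (\<nu> - int (m + k))) * (E ^^ k) ((F ^^ (m + k)) u) a)"
    by (rule lin_smult[OF lin_pow[OF lin_E]])
  also have "\<dots> = (\<lambda>a. of_int (int (Suc (m + k)) * (\<nu> - int (m + k))) * (of_int (cc \<nu> m k) * (F ^^ m) u a))"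
    by (simp only: Suc.IH \<nu>_def)
  also have "\<dots> = (\<lambda>a. of_int (cc \<nu> m (Suc k)) * (F ^^ m) u a)"
    by (simp only: cc_Suc of_int_mult mult.assoc mult.commute mult.left_commute)
  finally show ?case unfolding \<nu>_def .
qed


lemma of_int_nz: "(x::int) \<noteq> 0 \<Longrightarrow> (of_int x :: 'c::field_char_0) \<noteq> 0"
  by simp

lemma surj_h:
  assumes kq: "int k \<le> 2 * int q - int s"
  shows "hom q z \<Longrightarrow> (E ^^ h) z = (\<lambda>a. 0) \<Longrightarrow> \<exists>y. (E ^^ k) y = z"
proof (induction h arbitrary: z)
  case 0
  then have "z = (\<lambda>a. 0)" by simp
  then show ?case by (intro exI[of _ "\<lambda>a. 0"]) simp
next
  case (Suc h)
  define u where "u = (E ^^ h) z"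
  have hu: "hom (q + h) u" unfolding u_def by (rule hom_Epow[OF Suc.prems(1)])
  have Eu: "E u = (\<lambda>a. 0)" using Suc.prems(2) unfolding u_def by simp
  define \<nu> where "\<nu> = 2 * int (q + h) - int s"
  define c1 where "c1 = cc \<nu> 0 h"
  define c2 where "c2 = cc \<nu> h k"
  have c1nz: "(of_int c1 :: 'a) \<noteq> 0" unfolding c1_def
    by (rule of_int_nz, rule cc_pos) (use kq in \<open>simp add: \<nu>_def\<close>)
  have c2nz: "(of_int c2 :: 'a) \<noteq> 0" unfolding c2_def
    by (rule of_int_nz, rule cc_pos) (use kq in \<open>simp add: \<nu>_def\<close>)
  have EF1: "(E ^^ h) ((F ^^ h) u) = (\<lambda>a. of_int c1 * u a)"
    using EF_pow[OF hu Eu, of h 0] by (simp add: c1_def \<nu>_def)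
  have EF2: "(E ^^ k) ((F ^^ (h + k)) u) = (\<lambda>a. of_int c2 * (F ^^ h) u a)"
    using EF_pow[OF hu Eu, of k h] by (simp add: c2_def \<nu>_def)
  define z' where "z' = (\<lambda>a. z a - (1 / of_int c1) * (F ^^ h) u a)"
  have hF: "hom q ((F ^^ h) u)" using hom_Fpow[OF hu, of h] by simp
  have hz': "hom q z'" using hF Suc.prems(1) unfolding hom_def z'_def by simp
  have "(E ^^ h) z' = (\<lambda>a. (E ^^ h) z a - (1 / of_int c1) * (E ^^ h) ((F ^^ h) u) a)"
    unfolding z'_def lin_diff[OF lin_pow[OF lin_E]] lin_smult[OF lin_pow[OF lin_E]] by simp
  also have "\<dots> = (\<lambda>a. 0)" unfolding EF1 using c1nz by (simp add: u_def)
  finally obtain y' where y': "(E ^^ k) y' = z'" using Suc.IH[OF hz'] by blast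
  define y where "y = (\<lambda>a. y' a + (1 / (of_int c1 * of_int c2)) * (F ^^ (h + k)) u a)"
  have "(E ^^ k) y = (\<lambda>a. (E ^^ k) y' a + (1 / (of_int c1 * of_int c2)) * (E ^^ k) ((F ^^ (h + k)) u) a)"
    unfolding y_def lin_add[OF lin_pow[OF lin_E]] lin_smult[OF lin_pow[OF lin_E]] by simp
  also have "\<dots> = z" unfolding EF2 y' z'_def using c1nz c2nz by (simp add: fun_eq_iff)
  finally show ?case by blast
qed

lemma surj:
  assumes "int k \<le> 2 * int q - int s" "hom q z"
  shows "\<exists>y. (E ^^ k) y = z"
proof -
  have "hom (q + Suc s) ((E ^^ Suc s) z)" by (rule hom_Epow[OF assms(2)])
  then have "(E ^^ Suc s) z = (\<lambda>a. 0)" by (rule hom_zero_above) simp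
  then show ?thesis by (rule surj_h[OF assms(1) assms(2)])
qed

lemma cf_id: "lw + (2 * int (Suc j) + int (Suc j) * (lw + int j)) = int (Suc (Suc j)) * (lw + int (Suc j))"
  by (simp add: algebra_simps)

lemma CF:
  assumes "hom p g"
  shows "(E ^^ Suc j) (F g) = (\<lambda>a. F ((E ^^ Suc j) g) a + of_int (int (Suc j) * ((2 * int p - int s) + int j)) * (E ^^ j) g a)"
proof (induction j)
  case 0
  show ?case using comm_hom[OF assms] by simp
next
  case (Suc j)
  define lw where "lw = 2 * int p - int s"
  define G where "G = (E ^^ Suc j) g"
  have hG: "hom (p + Suc j) G" unfolding G_def by (rule hom_Epow[OF assms])
  have "(E ^^ Suc (Suc j)) (F g) = E ((E ^^ Suc j) (F g))" by simp
  also have "\<dots> = E (\<lambda>a. F G a + of_int (int (Suc j) * (lw + int j)) * (E ^^ j) g a)"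
    unfolding Suc.IH G_def lw_def ..
  also have "\<dots> = (\<lambda>a. E (F G) a + of_int (int (Suc j) * (lw + int j)) * E ((E ^^ j) g) a)"
    unfolding lin_add[OF lin_E] lin_smult[OF lin_E] ..
  also have "\<dots> = (\<lambda>a. F (E G) a + of_int (lw + 2 * int (Suc j)) * G a + of_int (int (Suc j) * (lw + int j)) * G a)"
    unfolding comm_hom[OF hG] by (simp add: G_def lw_def algebra_simps)
  also have "\<dots> = (\<lambda>a. F (E G) a + of_int (int (Suc (Suc j)) * (lw + int (Suc j))) * G a)"
    by (simp only: add.assoc comb_of_int cf_id)
  finally show ?case by (simp add: G_def lw_def)
qed

lemma lowest:
  assumes "F g = (\<lambda>a. 0)" "hom p g"
  shows "(E ^^ j) g = (\<lambda>a. 0) \<Longrightarrow> 2 * p + j \<le> s \<Longrightarrow> g = (\<lambda>a. 0)"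
proof (induction j)
  case 0 then show ?case by simp
next
  case (Suc j)
  have "(\<lambda>a. 0) = (E ^^ Suc j) (F g)" using assms(1) by simp
  also have "\<dots> = (\<lambda>a. of_int (int (Suc j) * ((2 * int p - int s) + int j)) * (E ^^ j) g a)"
    unfolding CF[OF assms(2)] Suc.prems(1) by simp
  finally have z: "\<And>a. of_int (int (Suc j) * ((2 * int p - int s) + int j)) * (E ^^ j) g a = (0::'a)"
    by (metis)
  have "int (Suc j) * ((2 * int p - int s) + int j) \<noteq> 0" using Suc.prems(2) by simp
  then have "(of_int (int (Suc j) * ((2 * int p - int s) + int j)) :: 'a) \<noteq> 0" by (rule of_int_nz)
  then have "(E ^^ j) g = (\<lambda>a. 0)" using z by (simp add: fun_eq_iff)
  then show ?case using Suc.IH Suc.prems(2) by simp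
qed

lemma inj:
  "hom q g \<Longrightarrow> (E ^^ j) g = (\<lambda>a. 0) \<Longrightarrow> 2 * q + j \<le> s \<Longrightarrow> g = (\<lambda>a. 0)"
proof (induction q arbitrary: j g)
  case 0
  show ?case by (rule lowest[OF hom_F0[OF 0(1)] 0(1) 0(2) 0(3)])
next
  case (Suc q)
  have hF: "hom q (F g)" by (rule hom_F[OF Suc.prems(1)])
  have "(E ^^ Suc j) (F g) = (\<lambda>a. 0)"
    unfolding CF[OF Suc.prems(1)] using Suc.prems(2) by simp
  then have "F g = (\<lambda>a. 0)" by (rule Suc.IH[OF hF]) (use Suc.prems(3) in simp)
  then show ?case by (rule lowest[OF _ Suc.prems(1) Suc.prems(2) Suc.prems(3)])
qed


lemma KL1:
  assumes hu: "hom q u" and Eu: "(E ^^ d) u = (\<lambda>a. 0)" and d1: "1 \<le> d" and ev: "even (s + d)"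
  shows "\<exists>w. (E ^^ (d - 1)) u = (E ^^ d) w"
proof (cases "2 * q + d \<le> s")
  case True
  then have "u = (\<lambda>a. 0)" by (rule inj[OF hu Eu])
  then show ?thesis by (intro exI[of _ "\<lambda>a. 0"]) simp
next
  case False
  from ev obtain m where "s + d = 2 * m" by (metis dvd_def)
  then have ge: "s + 2 \<le> 2 * q + d" using False by presburger
  have hz: "hom (q + (d - 1)) ((E ^^ (d - 1)) u)" by (rule hom_Epow[OF hu])
  have "int d \<le> 2 * int (q + (d - 1)) - int s" using ge d1 by simp
  from surj[OF this hz] obtain y where "(E ^^ d) y = (E ^^ (d - 1)) u" by blast
  then show ?thesis by metis
qed

lemma E_cong: "(\<And>a. inB a \<Longrightarrow> g a = h a) \<Longrightarrow> E g = E h"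
  unfolding E_def by (auto simp: fun_eq_iff dest: inB_sub intro!: sum.cong)

lemma Epow_cong: "(\<And>a. inB a \<Longrightarrow> g a = h a) \<Longrightarrow> inB a \<Longrightarrow> (E ^^ k) g a = (E ^^ k) h a"
proof (cases k)
  case 0 then show "(\<And>a. inB a \<Longrightarrow> g a = h a) \<Longrightarrow> inB a \<Longrightarrow> ?thesis" by simp
next
  case (Suc k')
  assume "\<And>a. inB a \<Longrightarrow> g a = h a"
  then have "E g = E h" by (rule E_cong)
  then show ?thesis unfolding Suc funpow_Suc_right comp_apply by simp
qed

lemma KL:
  assumes d1: "1 \<le> d" and ev: "even (s + d)" and Eu: "\<And>a. inB a \<Longrightarrow> (E ^^ d) u a = 0"
  shows "\<exists>w. \<forall>a. inB a \<longrightarrow> (E ^^ (d - 1)) u a = (E ^^ d) w a"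
proof -
  define uc where "uc q = (\<lambda>a. if inB a \<and> deg a = q then u a else 0)" for q
  have huc: "hom q (uc q)" for q unfolding hom_def uc_def by auto
  define u' where "u' = (\<lambda>a. \<Sum>q\<in>{..s}. uc q a)"
  have u'u: "u' a = u a" if "inB a" for a
  proof -
    have "u' a = (\<Sum>q\<in>{..s}. if q = deg a then u a else 0)"
      unfolding u'_def uc_def using that by (intro sum.cong) auto
    also have "\<dots> = u a" using deg_le_s[OF that] by simp
    finally show ?thesis .
  qed
  have Ed: "(E ^^ d) u' a = (E ^^ d) u a" if "inB a" for a
    by (rule Epow_cong[OF _ that]) (simp add: u'u)
  have Edsum: "(E ^^ d) u' = (\<lambda>a. \<Sum>q\<in>{..s}. (E ^^ d) (uc q) a)"
    unfolding u'_def by (rule lin_sum[OF _ lin_pow[OF lin_E]]) simp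
  have Euc: "(E ^^ d) (uc q) = (\<lambda>a. 0)" for q
  proof
    fix a
    have hq: "hom (q + d) ((E ^^ d) (uc q))" by (rule hom_Epow[OF huc])
    show "(E ^^ d) (uc q) a = 0"
    proof (cases "inB a \<and> deg a = q + d")
      case True
      show ?thesis
      proof (cases "q \<le> s")
        case qs: True
        have "0 = (E ^^ d) u a" using Eu True by simp
        also have "\<dots> = (\<Sum>q'\<in>{..s}. (E ^^ d) (uc q') a)" using Ed[of a] Edsum True by simp
        also have "\<dots> = (E ^^ d) (uc q) a + (\<Sum>q'\<in>{..s}. if q' = q then 0 else (E ^^ d) (uc q') a)"
          by (rule sum_split_at) (use qs in auto)
        also have "(\<Sum>q'\<in>{..s}. if q' = q then 0 else (E ^^ d) (uc q') a) = 0"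
        proof (rule sum.neutral, rule ballI)
          fix q' assume "q' \<in> {..s}"
          have "hom (q' + d) ((E ^^ d) (uc q'))" by (rule hom_Epow[OF huc])
          then show "(if q' = q then 0 else (E ^^ d) (uc q') a) = 0"
            using True unfolding hom_def by auto
        qed
        finally show ?thesis by simp
      next
        case False
        then have "uc q = (\<lambda>a. 0)" using hom_zero_above[OF huc] by simp
        then show ?thesis by simp
      qed
    next
      case False
      then show ?thesis using hq unfolding hom_def by auto
    qed
  qed
  have "\<forall>q. \<exists>w. (E ^^ (d - 1)) (uc q) = (E ^^ d) w"
    using KL1[OF huc Euc d1 ev] by blast
  then obtain W where W: "\<And>q. (E ^^ (d - 1)) (uc q) = (E ^^ d) (W q)" by metis
  define w where "w = (\<lambda>a. \<Sum>q\<in>{..s}. W q a)"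
  have "(E ^^ d) w = (\<lambda>a. \<Sum>q\<in>{..s}. (E ^^ d) (W q) a)"
    unfolding w_def by (rule lin_sum[OF _ lin_pow[OF lin_E]]) simp
  also have "\<dots> = (\<lambda>a. \<Sum>q\<in>{..s}. (E ^^ (d - 1)) (uc q) a)" by (simp only: W)
  also have "\<dots> = (E ^^ (d - 1)) u'"
    unfolding u'_def by (rule lin_sum[OF _ lin_pow[OF lin_E], symmetric]) simp
  finally have "\<forall>a. inB a \<longrightarrow> (E ^^ (d - 1)) u a = (E ^^ d) w a"
    using Epow_cong[of u' u, OF u'u] by auto
  then show ?thesis by blast
qed

end



lemma poly_expand: "(q::'b \<Rightarrow>\<^sub>0 'c::comm_monoid_add) = (\<Sum>t\<in>ks q. sg t (lk q t))"
proof (rule poly_mapping_eqI)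
  fix x
  have "lk (\<Sum>t\<in>ks q. sg t (lk q t)) x = (\<Sum>t\<in>ks q. lk q t when t = x)"
    by (simp add: lookup_sum lookup_single)
  also have "\<dots> = lk q x"
    by (cases "x \<in> ks q") (auto simp: when_def in_keys_iff)
  finally show "lk q x = lk (\<Sum>t\<in>ks q. sg t (lk q t)) x" by simp
qed

lemma mult_single_lookup:
  fixes q :: "(nat \<Rightarrow>\<^sub>0 nat) \<Rightarrow>\<^sub>0 'c::comm_ring_1"
  shows "lk (sg b c * q) a = (if \<exists>k. a = b + k then c * lk q (a - b) else 0)"
proof -
  have "sg b c * q = (\<Sum>t\<in>ks q. sg (b + t) (c * lk q t))"
    by (subst poly_expand[of q]) (simp add: sum_distrib_left mult_single)
  then have "lk (sg b c * q) a = (\<Sum>t\<in>ks q. c * lk q t when b + t = a)"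
    by (simp add: lookup_sum lookup_single)
  also have "\<dots> = (if \<exists>k. a = b + k then c * lk q (a - b) else 0)"
  proof (cases "\<exists>k. a = b + k")
    case True
    then obtain k where k: "a = b + k" by blast
    have "(\<Sum>t\<in>ks q. c * lk q t when b + t = a) = (\<Sum>t\<in>ks q. c * lk q t when t = k)"
      using k by (intro sum.cong) (auto simp: when_def)
    also have "\<dots> = c * lk q k" by (cases "k \<in> ks q") (auto simp: when_def in_keys_iff)
    finally show ?thesis using True k by simp
  next
    case False
    then show ?thesis by (auto simp: when_def intro!: sum.neutral)
  qed
  finally show ?thesis .
qed

lemma var_pow: "(var i :: 'c::comm_ring_1 mpoly) ^ k = sg (sg i k) 1"
proof (induction k)
  case (Suc k)
  have "sg i (Suc k) = sg i 1 + sg i k" by (simp add: single_add[symmetric])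
  then show ?case using Suc by (simp add: var_def mult_single del: One_nat_def)
qed simp

lemma ex_add_single: "(\<exists>k. (a::nat\<Rightarrow>\<^sub>0nat) = sg i j + k) \<longleftrightarrow> j \<le> lk a i"
proof
  assume "\<exists>k. a = sg i j + k" then show "j \<le> lk a i" by (auto simp: lookup_add)
next
  assume "j \<le> lk a i"
  then have "a = sg i j + (a - sg i j)"
    by (intro poly_mapping_eqI) (auto simp: lookup_add lookup_minus lookup_single when_def)
  then show "\<exists>k. a = sg i j + k" by blast
qed

lemma mult_var_lookup:
  "lk ((var i :: 'c::comm_ring_1 mpoly) * q) a = (if 0 < lk a i then lk q (a - sg i 1) else 0)"
  unfolding var_def mult_single_lookup ex_add_single by simp

lemma mult_varpow_lookup:
  "lk (((var i :: 'c::comm_ring_1 mpoly) ^ j) * q) a = (if j \<le> lk a i then lk q (a - sg i j) else 0)"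
  unfolding var_pow mult_single_lookup ex_add_single by simp


section \<open>polyR closure\<close>

lemma polyR_iff: "p \<in> polyR n \<longleftrightarrow> (\<forall>m\<in>ks p. ks m \<subseteq> {1..n})"
  by (simp add: polyR_def)

lemma polyR_0[simp]: "0 \<in> polyR n" by (simp add: polyR_def)
lemma polyR_1[simp]: "1 \<in> polyR n" by (simp add: polyR_def)

lemma polyR_add: "p \<in> polyR n \<Longrightarrow> q \<in> polyR n \<Longrightarrow> p + q \<in> polyR n"
  unfolding polyR_def using keys_add[of p q] by blast

lemma polyR_uminus: "p \<in> polyR n \<Longrightarrow> - p \<in> polyR n"
  unfolding polyR_def by (simp add: in_keys_iff)

lemma polyR_diff: "p \<in> polyR n \<Longrightarrow> q \<in> polyR n \<Longrightarrow> p - q \<in> polyR n"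
  using polyR_add[OF _ polyR_uminus] by (metis diff_conv_add_uminus)

lemma polyR_mult: "p \<in> polyR n \<Longrightarrow> q \<in> polyR n \<Longrightarrow> p * q \<in> polyR n"
proof -
  assume p: "p \<in> polyR n" and q: "q \<in> polyR n"
  show ?thesis unfolding polyR_iff
  proof (intro ballI)
    fix m assume "m \<in> ks (p * q)"
    then obtain a b where "m = a + b" "a \<in> ks p" "b \<in> ks q" using keys_mult by blast
    then show "ks m \<subseteq> {1..n}" using p q keys_add[of a b] unfolding polyR_def by blast
  qed
qed

lemma polyR_sum: "(\<And>x. x \<in> X \<Longrightarrow> f x \<in> polyR n) \<Longrightarrow> sum f X \<in> polyR n"
  by (induction X rule: infinite_finite_induct) (auto intro: polyR_add)

lemma polyR_pow: "p \<in> polyR n \<Longrightarrow> p ^ k \<in> polyR n"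
  by (induction k) (auto intro: polyR_mult)

lemma polyR_var: "i \<in> {1..n} \<Longrightarrow> var i \<in> polyR n"
  by (simp add: polyR_def var_def)

lemma polyR_single: "ks a \<subseteq> {1..n} \<Longrightarrow> sg a c \<in> polyR n"
  by (simp add: polyR_def)

section \<open>ideal_gen closure\<close>

lemma ig_0: "0 \<in> ideal_gen n S"
  unfolding ideal_gen_def by (rule CollectI, rule exI[of _ "\<lambda>g. 0"]) simp

lemma ig_add: fixes S :: "'a::comm_ring_1 mpoly set"
  shows "p \<in> ideal_gen n S \<Longrightarrow> q \<in> ideal_gen n S \<Longrightarrow> p + q \<in> ideal_gen n S"
  unfolding ideal_gen_def
proof (clarify)
  fix c c' :: "'a mpoly \<Rightarrow> 'a mpoly" assume c: "\<forall>g\<in>S. c g \<in> polyR n" and c': "\<forall>g\<in>S. c' g \<in> polyR n"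
  show "\<exists>c''. (\<forall>g\<in>S. c'' g \<in> polyR n) \<and> (\<Sum>g\<in>S. c g * g) + (\<Sum>g\<in>S. c' g * g) = (\<Sum>g\<in>S. c'' g * g)"
    by (rule exI[of _ "\<lambda>g. c g + c' g"]) (use c c' in \<open>auto intro: polyR_add simp: sum.distrib distrib_right\<close>)
qed

lemma ig_mult: fixes S :: "'a::comm_ring_1 mpoly set"
  shows "p \<in> ideal_gen n S \<Longrightarrow> r \<in> polyR n \<Longrightarrow> r * p \<in> ideal_gen n S"
  unfolding ideal_gen_def
proof (clarify)
  fix c :: "'a mpoly \<Rightarrow> 'a mpoly" assume c: "\<forall>g\<in>S. c g \<in> polyR n" and r: "r \<in> polyR n"
  show "\<exists>c''. (\<forall>g\<in>S. c'' g \<in> polyR n) \<and> r * (\<Sum>g\<in>S. c g * g) = (\<Sum>g\<in>S. c'' g * g)"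
    by (rule exI[of _ "\<lambda>g. r * c g"]) (use c r in \<open>auto intro: polyR_mult simp: sum_distrib_left mult.assoc\<close>)
qed

lemma ig_uminus: assumes "p \<in> ideal_gen n S" shows "- p \<in> ideal_gen n S"
proof -
  have "-1 \<in> polyR n" by (rule polyR_uminus[OF polyR_1])
  from ig_mult[OF assms this] show ?thesis by simp
qed

lemma ig_diff: "p \<in> ideal_gen n S \<Longrightarrow> q \<in> ideal_gen n S \<Longrightarrow> p - q \<in> ideal_gen n S"
  using ig_add[OF _ ig_uminus] by (metis diff_conv_add_uminus)

lemma ig_gen: assumes "finite S" "g \<in> S" shows "g \<in> ideal_gen n S"
proof -
  have "(\<Sum>h\<in>S. (if h = g then 1 else 0) * h) = (\<Sum>h\<in>S. if h = g then h else 0)"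
    by (intro sum.cong) auto
  also have "\<dots> = g" using assms by (simp add: sum.delta')
  finally show ?thesis unfolding ideal_gen_def
    by (intro CollectI exI[of _ "\<lambda>h. if h = g then 1 else 0"]) auto
qed

lemma ig_sum: "(\<And>x. x \<in> X \<Longrightarrow> f x \<in> ideal_gen n S) \<Longrightarrow> sum f X \<in> ideal_gen n S"
  by (induction X rule: infinite_finite_induct) (auto intro: ig_add ig_0)

lemma ig_polyR: "S \<subseteq> polyR n \<Longrightarrow> ideal_gen n S \<subseteq> polyR n"
  unfolding ideal_gen_def by (auto intro!: polyR_sum polyR_mult)

lemma ig_mono: "finite T \<Longrightarrow> S \<subseteq> T \<Longrightarrow> ideal_gen n S \<subseteq> ideal_gen n T"
proof
  fix p assume T: "finite T" and ST: "S \<subseteq> T" and "p \<in> ideal_gen n S"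
  then obtain c where c: "\<forall>g\<in>S. c g \<in> polyR n" and p: "p = (\<Sum>g\<in>S. c g * g)"
    unfolding ideal_gen_def by blast
  have "p = (\<Sum>g\<in>T. (if g \<in> S then c g else 0) * g)"
    unfolding p using T ST by (intro sum.mono_neutral_cong_left) auto
  then show "p \<in> ideal_gen n T" unfolding ideal_gen_def using c by (auto intro!: exI[of _ "\<lambda>g. if g \<in> S then c g else 0"])
qed

lemma ig_insert:
  assumes "finite S" "p \<in> ideal_gen n (insert g S)"
  shows "\<exists>j f. j \<in> ideal_gen n S \<and> f \<in> polyR n \<and> p = j + f * g"
proof -
  obtain c where c: "\<forall>h\<in>insert g S. c h \<in> polyR n" and p: "p = (\<Sum>h\<in>insert g S. c h * h)"
    using assms(2) unfolding ideal_gen_def by blast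
  show ?thesis
  proof (cases "g \<in> S")
    case True
    then have "p \<in> ideal_gen n S" using assms(2) by (simp add: insert_absorb)
    then show ?thesis by (intro exI[of _ p] exI[of _ 0]) simp
  next
    case False
    then have "p = (\<Sum>h\<in>S. c h * h) + c g * g" using p assms(1) by (simp add: add.commute)
    moreover have "(\<Sum>h\<in>S. c h * h) \<in> ideal_gen n S" unfolding ideal_gen_def using c by auto
    ultimately show ?thesis using c by blast
  qed
qed

lemma ig_single_iff: "p \<in> ideal_gen n {g} \<longleftrightarrow> (\<exists>c\<in>polyR n. p = c * g)"
  unfolding ideal_gen_def by auto

lemma ip_intro: "a \<in> I \<Longrightarrow> b \<in> J \<Longrightarrow> a + b \<in> ideal_plus I J"
  unfolding ideal_plus_def by blast




locale mainl =
  fixes n :: nat and d :: "nat \<Rightarrow> nat"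
  assumes n1: "1 \<le> n" and dpos: "\<forall>i\<in>{1..n}. 0 < d i"
begin

sublocale box "{1..<n}" d
proof
  show "finite {1..<n}" by simp
  show "\<forall>i\<in>{1..<n}. 1 \<le> d i"
  proof
    fix i assume "i \<in> {1..<n}"
    then have "i \<in> {1..n}" by auto
    then show "1 \<le> d i" using dpos by (simp add: Suc_le_eq)
  qed
qed

definition en :: "nat \<Rightarrow>\<^sub>0 nat" where "en = sg n 1"

definition mm :: "'a::field_char_0 mpoly" where "mm = (\<Sum>i\<in>{1..<n}. var i)"

lemma inB_n: "inB a \<Longrightarrow> lk a n = 0"
  unfolding inB_def by (auto simp: in_keys_iff)

lemma inB_keys: "inB a \<Longrightarrow> ks a \<subseteq> {1..<n}"
  unfolding inB_def by auto

lemma varn_low: "inB a \<Longrightarrow> lk ((var n :: 'a::field_char_0 mpoly) * q) a = 0"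
  by (simp add: mult_var_lookup inB_n)

lemma varn_high: "lk ((var n :: 'a::field_char_0 mpoly) * q) (a + en) = lk q a"
  by (simp add: mult_var_lookup en_def lookup_add pm_back2 del: One_nat_def)

lemma pm_en_swap: "i \<noteq> n \<Longrightarrow> a + en - sg i 1 = a - sg i 1 + en"
  unfolding en_def by (rule poly_mapping_eqI) (auto simp: lookup_add lookup_minus lookup_single when_def)

lemma vari_high: "i \<noteq> n \<Longrightarrow> lk ((var i :: 'a::field_char_0 mpoly) * q) (a + en) = (if 0 < lk a i then lk q (a - sg i 1 + en) else 0)"
  by (simp add: mult_var_lookup en_def lookup_add lookup_single when_def pm_en_swap[unfolded en_def] del: One_nat_def)

lemma mm_low: "inB a \<Longrightarrow> lk ((mm :: 'a::field_char_0 mpoly) * q) a = E (\<lambda>b. lk q b) a"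
proof -
  assume aB: "inB a"
  have "lk (mm * q) a = (\<Sum>i\<in>{1..<n}. lk (var i * q) a)"
    unfolding mm_def sum_distrib_right lookup_sum ..
  also have "\<dots> = (\<Sum>i\<in>{1..<n}. if 0 < lk a i then lk q (a - sg i 1) else 0)"
    by (simp add: mult_var_lookup del: One_nat_def)
  also have "\<dots> = (\<Sum>i\<in>{i\<in>{1..<n}. 0 < lk a i}. lk q (a - sg i 1))"
    by (rule sum.inter_filter[symmetric]) simp
  also have "\<dots> = E (\<lambda>b. lk q b) a"
    using aB unfolding E_def by simp
  finally show ?thesis .
qed

lemma mm_high: "inB a \<Longrightarrow> lk ((mm :: 'a::field_char_0 mpoly) * q) (a + en) = E (\<lambda>b. lk q (b + en)) a"
proof -
  assume aB: "inB a"
  have "lk (mm * q) (a + en) = (\<Sum>i\<in>{1..<n}. lk (var i * q) (a + en))"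
    unfolding mm_def sum_distrib_right lookup_sum ..
  also have "\<dots> = (\<Sum>i\<in>{1..<n}. if 0 < lk a i then lk q (a - sg i 1 + en) else 0)"
    by (intro sum.cong refl) (simp add: vari_high del: One_nat_def)
  also have "\<dots> = (\<Sum>i\<in>{i\<in>{1..<n}. 0 < lk a i}. lk q (a - sg i 1 + en))"
    by (rule sum.inter_filter[symmetric]) simp
  also have "\<dots> = E (\<lambda>b. lk q (b + en)) a"
    using aB unfolding E_def by simp
  finally show ?thesis .
qed

lemma ell_split: "(\<Sum>i=1..n. var i) = (mm :: 'a::field_char_0 mpoly) + var n"
proof -
  have "{1..n} = insert n {1..<n}" using n1 by auto
  then show ?thesis unfolding mm_def by (simp add: add.commute)
qed

lemma ell_pow:
  "\<forall>a. inB a \<longrightarrow> lk ((\<Sum>i=1..n. var i) ^ k * (q :: 'a::field_char_0 mpoly)) a = (E ^^ k) (\<lambda>b. lk q b) a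
     \<and> lk ((\<Sum>i=1..n. var i) ^ k * q) (a + en) =
         (E ^^ k) (\<lambda>b. lk q (b + en)) a + of_nat k * (E ^^ (k - 1)) (\<lambda>b. lk q b) a"
proof (induction k)
  case 0 then show ?case by simp
next
  case (Suc k)
  define r where "r = (\<Sum>i=1..n. var i) ^ k * q"
  have r: "(\<Sum>i=1..n. var i) ^ Suc k * q = mm * r + var n * r"
    unfolding r_def ell_split power_Suc by (simp only: mult.assoc distrib_right)
  have IH1: "\<And>b. inB b \<Longrightarrow> lk r b = (E ^^ k) (\<lambda>b. lk q b) b"
    using Suc.IH unfolding r_def by blast
  have IH2: "\<And>b. inB b \<Longrightarrow> lk r (b + en) = (\<lambda>b. (E ^^ k) (\<lambda>b. lk q (b + en)) b + of_nat k * (E ^^ (k - 1)) (\<lambda>b. lk q b) b) b"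
    using Suc.IH unfolding r_def by blast
  have c1: "E (\<lambda>b. lk r b) = E ((E ^^ k) (\<lambda>b. lk q b))" by (rule E_cong, rule IH1)
  have c2: "E (\<lambda>b. lk r (b + en)) = E (\<lambda>b. (E ^^ k) (\<lambda>b. lk q (b + en)) b + of_nat k * (E ^^ (k - 1)) (\<lambda>b. lk q b) b)"
    by (rule E_cong, rule IH2)
  have c3: "of_nat k * E ((E ^^ (k - 1)) (\<lambda>b. lk q b)) a = of_nat k * (E ^^ k) (\<lambda>b. lk q b) a" for a
    by (cases k) simp_all
  show ?case
  proof (intro allI impI conjI)
    fix a assume aB: "inB a"
    have "lk ((\<Sum>i=1..n. var i) ^ Suc k * q) a = lk (mm * r) a + lk (var n * r) a"
      by (simp only: r lookup_add)
    also have "\<dots> = E (\<lambda>b. lk r b) a"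
      by (simp only: mm_low[OF aB] varn_low[OF aB] add_0_right)
    also have "\<dots> = (E ^^ Suc k) (\<lambda>b. lk q b) a"
      by (simp only: c1 funpow.simps comp_apply)
    finally show "lk ((\<Sum>i=1..n. var i) ^ Suc k * q) a = (E ^^ Suc k) (\<lambda>b. lk q b) a" .
    have "lk ((\<Sum>i=1..n. var i) ^ Suc k * q) (a + en) = lk (mm * r) (a + en) + lk (var n * r) (a + en)"
      by (simp only: r lookup_add)
    also have "\<dots> = E (\<lambda>b. lk r (b + en)) a + lk r a"
      by (simp only: mm_high[OF aB] varn_high)
    also have "\<dots> = (E ^^ Suc k) (\<lambda>b. lk q (b + en)) a + of_nat k * E ((E ^^ (k - 1)) (\<lambda>b. lk q b)) a + (E ^^ k) (\<lambda>b. lk q b) a"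
      unfolding c2 lin_add[OF lin_E] lin_smult[OF lin_E] IH1[OF aB] by simp
    also have "\<dots> = (E ^^ Suc k) (\<lambda>b. lk q (b + en)) a + of_nat (Suc k) * (E ^^ (Suc k - 1)) (\<lambda>b. lk q b) a"
      unfolding c3 by (simp add: algebra_simps)
    finally show "lk ((\<Sum>i=1..n. var i) ^ Suc k * q) (a + en) =
         (E ^^ Suc k) (\<lambda>b. lk q (b + en)) a + of_nat (Suc k) * (E ^^ (Suc k - 1)) (\<lambda>b. lk q b) a" .
  qed
qed


definition Sp :: "'a::field_char_0 mpoly set" where
  "Sp = ((\<lambda>i. var i ^ d i) ` {1..<n}) \<union> {var n ^ 2}"

lemma finite_Sp: "finite Sp" by (simp add: Sp_def)

lemma Sp_polyR: "Sp \<subseteq> polyR n"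
  unfolding Sp_def using n1 by (auto intro!: polyR_pow polyR_var)

lemma J1:
  assumes "q \<in> ideal_gen n (Sp :: 'a::field_char_0 mpoly set)" "inB a"
  shows "lk q a = 0 \<and> lk q (a + en) = 0"
proof -
  obtain c where q: "q = (\<Sum>g\<in>Sp. c g * g)" using assms(1) unfolding ideal_gen_def by blast
  have an: "lk a n = 0" by (rule inB_n[OF assms(2)])
  have z: "lk (c g * g) x = 0" if "g \<in> Sp" "x = a \<or> x = a + en" for g x
  proof -
    have bnd: "lk x i < d i" if "i \<in> {1..<n}" for i
      using assms(2) that \<open>x = a \<or> x = a + en\<close> unfolding inB_def
      by (auto simp: en_def lookup_add lookup_single when_def)
    have xn: "lk x n \<le> 1" using an \<open>x = a \<or> x = a + en\<close>
      by (auto simp: en_def lookup_add)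
    from that(1) consider (i) i where "i \<in> {1..<n}" "g = var i ^ d i" | (n) "g = var n ^ 2"
      unfolding Sp_def by blast
    then show ?thesis
    proof cases
      case i
      show ?thesis using bnd[OF i(1)] unfolding i(2) mult.commute[of "c _"] mult_varpow_lookup by simp
    next
      case n
      show ?thesis using xn unfolding n mult.commute[of "c _"] mult_varpow_lookup by simp
    qed
  qed
  show ?thesis unfolding q lookup_sum using z by simp
qed

lemma ip_0: "0 \<in> ideal_plus (ideal_gen n S) (ideal_gen n T)"
  using ip_intro[OF ig_0 ig_0] by simp

lemma ip_add: fixes S :: "'a::comm_ring_1 mpoly set"
  shows "p \<in> ideal_plus (ideal_gen n S) (ideal_gen n T) \<Longrightarrow> q \<in> ideal_plus (ideal_gen n S) (ideal_gen n T)
    \<Longrightarrow> p + q \<in> ideal_plus (ideal_gen n S) (ideal_gen n T)"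
  unfolding ideal_plus_def
proof clarify
  fix a b a' b' :: "'a mpoly"
  assume "a \<in> ideal_gen n S" "b \<in> ideal_gen n T" "a' \<in> ideal_gen n S" "b' \<in> ideal_gen n T"
  then show "\<exists>a'' b''. a + b + (a' + b') = a'' + b'' \<and> a'' \<in> ideal_gen n S \<and> b'' \<in> ideal_gen n T"
    by (intro exI[of _ "a + a'"] exI[of _ "b + b'"]) (auto intro: ig_add simp: algebra_simps)
qed

lemma ip_sum: "(\<And>x. x \<in> X \<Longrightarrow> f x \<in> ideal_plus (ideal_gen n S) (ideal_gen n T)) \<Longrightarrow>
   sum f X \<in> ideal_plus (ideal_gen n S) (ideal_gen n T)"
  by (induction X rule: infinite_finite_induct) (auto intro: ip_add ip_0)

lemma mono_in_ideal:
  fixes S :: "'a::comm_ring_1 mpoly set"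
  assumes "ks t \<subseteq> {1..n}" "t = b + k" "sg b 1 \<in> ideal_gen n S"
  shows "sg t c \<in> ideal_gen n S"
proof -
  have "ks k \<subseteq> ks t" using assms(2) by (auto simp: in_keys_iff lookup_add)
  then have "sg k c \<in> polyR n" using assms(1) by (intro polyR_single) auto
  from ig_mult[OF assms(3) this] show ?thesis using assms(2) by (simp add: mult_single add.commute)
qed

lemma mono_class:
  assumes "ks t \<subseteq> {1..n}"
  shows "2 \<le> lk t n \<or> (\<exists>i\<in>{1..<n}. d i \<le> lk t i) \<or> (\<exists>a. inB a \<and> (t = a \<or> t = a + en))"
proof (rule ccontr)
  assume H: "\<not> ?thesis"
  define a where "a = t - sg n (lk t n)"
  have la: "lk a i = (if i = n then 0 else lk t i)" for i
    by (simp add: a_def lookup_minus lookup_single when_def)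
  have aB: "inB a" unfolding inB_def
  proof
    show "ks a \<subseteq> {1..<n}"
    proof
      fix i assume "i \<in> ks a"
      then have "i \<noteq> n" "i \<in> ks t" using la by (auto simp: in_keys_iff split: if_splits)
      then show "i \<in> {1..<n}" using assms by auto
    qed
    show "\<forall>i\<in>{1..<n}. lk a i < d i" using H la by auto
  qed
  have "lk t n \<le> 1" using H by auto
  then consider "lk t n = 0" | "lk t n = 1" by linarith
  then have "t = a \<or> t = a + en"
  proof cases
    case 1
    then have "t = a" by (intro poly_mapping_eqI) (simp add: la)
    then show ?thesis by simp
  next
    case 2
    then have "t = a + en" by (intro poly_mapping_eqI) (auto simp: la en_def lookup_add lookup_single when_def)
    then show ?thesis by simp
  qed
  then show False using H aB by blast
qed

lemma J23:
  assumes qR: "q \<in> polyR n" and lo: "\<And>a. inB a \<Longrightarrow> lk (q :: 'a::field_char_0 mpoly) a = 0"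
  shows "q \<in> ideal_plus (ideal_gen n Sp) (ideal_gen n {var n})"
    and "(\<And>a. inB a \<Longrightarrow> lk q (a + en) = 0) \<Longrightarrow> q \<in> ideal_gen n Sp"
proof -
  have "var n ^ 2 \<in> ideal_gen n (Sp :: 'a mpoly set)"
    by (rule ig_gen[OF finite_Sp]) (simp add: Sp_def)
  then have gen_n2: "sg (sg n 2) 1 \<in> ideal_gen n (Sp :: 'a mpoly set)" by (simp only: var_pow)
  have gen_i: "sg (sg i (d i)) 1 \<in> ideal_gen n (Sp :: 'a mpoly set)" if "i \<in> {1..<n}" for i
  proof -
    have "var i ^ d i \<in> ideal_gen n (Sp :: 'a mpoly set)"
      by (rule ig_gen[OF finite_Sp]) (use that in \<open>simp add: Sp_def\<close>)
    then show ?thesis by (simp only: var_pow)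
  qed
  have "var n \<in> ideal_gen n {var n :: 'a mpoly}" by (rule ig_gen) auto
  then have gen_X: "sg en 1 \<in> ideal_gen n {var n :: 'a mpoly}" by (simp only: var_def en_def)
  have mem: "sg t (lk q t) \<in> ideal_gen n Sp \<or> (\<exists>a. inB a \<and> t = a + en)" if "t \<in> ks q" for t
  proof -
    have kt: "ks t \<subseteq> {1..n}" using qR that unfolding polyR_def by blast
    from mono_class[OF kt] consider (a) "2 \<le> lk t n" | (b) i where "i \<in> {1..<n}" "d i \<le> lk t i"
      | (c) a where "inB a" "t = a \<or> t = a + en" by blast
    then show ?thesis
    proof cases
      case a
      then obtain k where "t = sg n 2 + k" using ex_add_single by blast
      then show ?thesis using mono_in_ideal[OF kt _ gen_n2] by blast
    next
      case b
      then obtain k where "t = sg i (d i) + k" using ex_add_single by blast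
      then show ?thesis using mono_in_ideal[OF kt _ gen_i[OF b(1)]] by blast
    next
      case c
      have "t \<noteq> a" using lo[OF c(1)] that by (auto simp: in_keys_iff)
      then show ?thesis using c by blast
    qed
  qed
  show "q \<in> ideal_plus (ideal_gen n Sp) (ideal_gen n {var n})"
  proof (subst poly_expand[of q], rule ip_sum)
    fix t assume t: "t \<in> ks q"
    have kt: "ks t \<subseteq> {1..n}" using qR t unfolding polyR_def by blast
    from mem[OF t] show "sg t (lk q t) \<in> ideal_plus (ideal_gen n Sp) (ideal_gen n {var n})"
    proof
      assume "sg t (lk q t) \<in> ideal_gen n Sp"
      then show ?thesis using ip_intro[OF _ ig_0] by fastforce
    next
      assume "\<exists>a. inB a \<and> t = a + en"
      then obtain a where "t = en + a" by (auto simp: add.commute)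
      then have "sg t (lk q t) \<in> ideal_gen n {var n}" by (rule mono_in_ideal[OF kt _ gen_X])
      then show ?thesis using ip_intro[OF ig_0] by fastforce
    qed
  qed
  assume hi: "\<And>a. inB a \<Longrightarrow> lk q (a + en) = 0"
  show "q \<in> ideal_gen n Sp"
  proof (subst poly_expand[of q], rule ig_sum)
    fix t assume t: "t \<in> ks q"
    have "\<not> (\<exists>a. inB a \<and> t = a + en)" using hi t by (auto simp: in_keys_iff)
    then show "sg t (lk q t) \<in> ideal_gen n Sp" using mem[OF t] by blast
  qed
qed

end



context mainl
begin

definition Bset :: "(nat \<Rightarrow>\<^sub>0 nat) set" where "Bset = {a. inB a}"

lemma finite_Bset: "finite Bset"
proof -
  let ?f = "\<lambda>a::nat\<Rightarrow>\<^sub>0nat. restrict (lk a) {1..<n}"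
  have "inj_on ?f Bset"
  proof
    fix a b assume a: "a \<in> Bset" and b: "b \<in> Bset" and eq: "?f a = ?f b"
    show "a = b"
    proof (rule poly_mapping_eqI)
      fix i
      show "lk a i = lk b i"
      proof (cases "i \<in> {1..<n}")
        case True then show ?thesis using fun_cong[OF eq, of i] by simp
      next
        case False
        then have "i \<notin> ks a" "i \<notin> ks b" using a b inB_keys[of a] inB_keys[of b] by (auto simp: Bset_def)
        then show ?thesis by (simp add: in_keys_iff)
      qed
    qed
  qed
  moreover have "?f ` Bset \<subseteq> PiE {1..<n} (\<lambda>i. {..<d i})"
    unfolding Bset_def inB_def by auto
  then have "finite (?f ` Bset)" by (rule finite_subset) (simp add: finite_PiE)
  ultimately show ?thesis using finite_imageD by blast
qed

definition Pf :: "((nat \<Rightarrow>\<^sub>0 nat) \<Rightarrow> 'a::field_char_0) \<Rightarrow> 'a mpoly" where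
  "Pf g = (\<Sum>a\<in>Bset. sg a (g a))"

lemma Pf_lookup: "lk (Pf g) x = (if inB x then g x else 0)"
proof -
  have "lk (Pf g) x = (\<Sum>a\<in>Bset. g a when a = x)"
    by (simp add: Pf_def lookup_sum lookup_single)
  also have "\<dots> = (if inB x then g x else 0)"
    using finite_Bset by (cases "inB x") (auto simp: Bset_def when_def)
  finally show ?thesis .
qed

lemma Pf_polyR: "Pf g \<in> polyR n"
  unfolding Pf_def by (rule polyR_sum, rule polyR_single) (use inB_keys in \<open>fastforce simp: Bset_def\<close>)

lemma not_inB_en: "\<not> inB (a + en)"
proof
  assume "inB (a + en)"
  then have "lk (a + en) n = 0" by (rule inB_n)
  moreover have "lk (a + en) n = lk a n + 1" by (simp add: en_def lookup_add)
  ultimately show False by simp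
qed

lemma Pf_high: "lk (Pf g) (a + en) = 0"
  using not_inB_en[of a] by (simp add: Pf_lookup)

lemma ell_polyR: "(\<Sum>i=1..n. var i :: 'a::field_char_0 mpoly) \<in> polyR n"
  by (rule polyR_sum, rule polyR_var) simp

lemma varn_polyR: "var n \<in> polyR n" using n1 by (intro polyR_var) simp

lemma Sp_gen_n2: "var n ^ 2 \<in> ideal_gen n (Sp :: 'a::field_char_0 mpoly set)"
  by (rule ig_gen[OF finite_Sp]) (simp add: Sp_def)

lemma X_gen: "c \<in> polyR n \<Longrightarrow> c * var n \<in> ideal_gen n {var n}"
  by (rule ig_mult[OF ig_gen]) auto


lemma lk_ellD: "inB a \<Longrightarrow> lk ((\<Sum>i=1..n. var i) ^ k * (q :: 'a::field_char_0 mpoly)) a = (E ^^ k) (\<lambda>b. lk q b) a"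
  using ell_pow by blast

lemma lk_ellD_high: "inB a \<Longrightarrow> lk ((\<Sum>i=1..n. var i) ^ k * (q :: 'a::field_char_0 mpoly)) (a + en) =
         (E ^^ k) (\<lambda>b. lk q (b + en)) a + of_nat k * (E ^^ (k - 1)) (\<lambda>b. lk q b) a"
  using ell_pow by blast

lemma main_I:
  fixes D :: nat
  assumes D1: "1 \<le> D" and ev: "even (s + D)"
  defines "I \<equiv> ideal_gen n (insert ((\<Sum>i=1..n. var i) ^ D) (Sp :: 'a::field_char_0 mpoly set))"
  defines "X \<equiv> ideal_gen n {var n :: 'a mpoly}"
  shows "ideal_colon n I (var n) = ideal_plus I X"
proof
  let ?l = "(\<Sum>i=1..n. var i :: 'a mpoly) ^ D"
  have finI: "finite (insert ?l Sp)" using finite_Sp by simp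
  have IR: "I \<subseteq> polyR n" unfolding I_def
    by (rule ig_polyR) (use Sp_polyR polyR_pow[OF ell_polyR] in auto)
  have SpI: "ideal_gen n Sp \<subseteq> I" unfolding I_def by (rule ig_mono[OF finI]) auto
  have lI: "?l \<in> I" unfolding I_def by (rule ig_gen[OF finI]) simp
  show "ideal_colon n I (var n) \<subseteq> ideal_plus I X"
  proof
    fix p assume "p \<in> ideal_colon n I (var n)"
    then have pR: "p \<in> polyR n" and pI: "p * var n \<in> I" unfolding ideal_colon_def by auto
    obtain j f where j: "j \<in> ideal_gen n Sp" and fR: "f \<in> polyR n" and eq: "p * var n = j + f * ?l"
      using ig_insert[OF finite_Sp pI[unfolded I_def]] by blast
    have low: "(E ^^ D) (\<lambda>b. lk f b) a = 0" and
      high: "lk p a = (E ^^ D) (\<lambda>b. lk f (b + en)) a + of_nat D * (E ^^ (D - 1)) (\<lambda>b. lk f b) a"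
      if aB: "inB a" for a
    proof -
      have e1: "lk (p * var n) a = 0" by (simp only: mult.commute[of p] varn_low[OF aB])
      have e2: "lk (f * ?l) a = (E ^^ D) (\<lambda>b. lk f b) a" by (simp only: mult.commute[of f] lk_ellD[OF aB])
      have e3: "lk (p * var n) (a + en) = lk p a" by (simp only: mult.commute[of p] varn_high)
      have e4: "lk (f * ?l) (a + en) = (E ^^ D) (\<lambda>b. lk f (b + en)) a + of_nat D * (E ^^ (D - 1)) (\<lambda>b. lk f b) a"
        by (simp only: mult.commute[of f] lk_ellD_high[OF aB])
      have "lk (p * var n) a = lk j a + lk (f * ?l) a" unfolding eq by (rule lookup_add)
      then show "(E ^^ D) (\<lambda>b. lk f b) a = 0" using e1 e2 J1[OF j aB] by simp
      have "lk (p * var n) (a + en) = lk j (a + en) + lk (f * ?l) (a + en)" unfolding eq by (rule lookup_add)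
      then show "lk p a = (E ^^ D) (\<lambda>b. lk f (b + en)) a + of_nat D * (E ^^ (D - 1)) (\<lambda>b. lk f b) a"
        using e3 e4 J1[OF j aB] by simp
    qed
    obtain w where w: "\<And>a. inB a \<Longrightarrow> (E ^^ (D - 1)) (\<lambda>b. lk f b) a = (E ^^ D) w a"
      using KL[OF D1 ev low] by blast
    define h where "h = (\<lambda>b. lk f (b + en) + of_nat D * w b)"
    have ph: "lk p a = (E ^^ D) h a" if aB: "inB a" for a
      unfolding h_def lin_add[OF lin_pow[OF lin_E]] lin_smult[OF lin_pow[OF lin_E]]
      using high[OF aB] w[OF aB] by simp
    define g where "g = Pf h"
    define q where "q = p - g * ?l"
    have gR: "g \<in> polyR n" unfolding g_def by (rule Pf_polyR)
    have qR: "q \<in> polyR n" unfolding q_def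
      by (intro polyR_diff pR polyR_mult gR polyR_pow ell_polyR)
    have q0: "lk q a = 0" if aB: "inB a" for a
    proof -
      have "lk (?l * g) a = (E ^^ D) (\<lambda>b. lk g b) a" by (rule lk_ellD[OF aB])
      also have "\<dots> = (E ^^ D) h a"
        by (rule Epow_cong[OF _ aB]) (simp add: g_def Pf_lookup)
      finally show ?thesis unfolding q_def lookup_minus using ph[OF aB] by (simp add: mult.commute)
    qed
    have "q \<in> ideal_plus (ideal_gen n Sp) X" unfolding X_def by (rule J23(1)[OF qR q0])
    then obtain j' x where j': "j' \<in> ideal_gen n Sp" and x: "x \<in> X" and qe: "q = j' + x"
      unfolding ideal_plus_def by blast
    have gl: "g * ?l \<in> I" using ig_mult[OF lI[unfolded I_def] gR] unfolding I_def by (simp add: mult.commute)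
    have j'I: "j' \<in> I" using SpI j' by blast
    have "g * ?l + j' \<in> I" using ig_add[OF gl[unfolded I_def] j'I[unfolded I_def]] unfolding I_def .
    moreover have "p = (g * ?l + j') + x" using qe unfolding q_def by (simp add: algebra_simps)
    ultimately show "p \<in> ideal_plus I X" using x unfolding ideal_plus_def by blast
  qed
  show "ideal_plus I X \<subseteq> ideal_colon n I (var n)"
  proof
    fix p assume "p \<in> ideal_plus I X"
    then obtain a b where a: "a \<in> I" and b: "b \<in> X" and p: "p = a + b" unfolding ideal_plus_def by blast
    obtain c where cR: "c \<in> polyR n" and bc: "b = c * var n" using b unfolding X_def ig_single_iff by blast
    have pR: "p \<in> polyR n" unfolding p bc using IR a cR varn_polyR by (auto intro: polyR_add polyR_mult)
    have "var n * a \<in> I" by (rule ig_mult[OF a[unfolded I_def] varn_polyR, folded I_def])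
    moreover have "c * var n ^ 2 \<in> I" using ig_mult[OF Sp_gen_n2 cR] SpI by auto
    ultimately have "var n * a + c * var n ^ 2 \<in> I" unfolding I_def by (rule ig_add)
    moreover have "p * var n = var n * a + c * var n ^ 2" unfolding p bc by (simp add: algebra_simps power2_eq_square)
    ultimately show "p \<in> ideal_colon n I (var n)" using pR unfolding ideal_colon_def by simp
  qed
qed


lemma main_G:
  fixes D :: nat
  assumes D1: "1 \<le> D" and ev: "even (s + D)"
  defines "G \<equiv> ideal_colon n (ideal_gen n (Sp :: 'a::field_char_0 mpoly set)) ((\<Sum>i=1..n. var i) ^ D)"
  defines "X \<equiv> ideal_gen n {var n :: 'a mpoly}"
  shows "ideal_colon n G (var n) = ideal_plus G X"
proof
  let ?l = "(\<Sum>i=1..n. var i :: 'a mpoly) ^ D"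
  have lR: "?l \<in> polyR n" by (rule polyR_pow[OF ell_polyR])
  have Gi: "p \<in> G \<longleftrightarrow> p \<in> polyR n \<and> p * ?l \<in> ideal_gen n Sp" for p
    unfolding G_def ideal_colon_def by simp
  show "ideal_colon n G (var n) \<subseteq> ideal_plus G X"
  proof
    fix p assume "p \<in> ideal_colon n G (var n)"
    then have pR: "p \<in> polyR n" and pG: "p * var n \<in> G" unfolding ideal_colon_def by auto
    have J: "p * var n * ?l \<in> ideal_gen n Sp" using pG Gi by blast
    have low: "(E ^^ D) (\<lambda>b. lk p b) a = 0" if aB: "inB a" for a
    proof -
      have "0 = lk (?l * (var n * p)) (a + en)"
        using J1[OF J aB] by (simp add: mult.commute mult.left_commute)
      also have "\<dots> = (E ^^ D) (\<lambda>b. lk (var n * p) (b + en)) a + of_nat D * (E ^^ (D - 1)) (\<lambda>b. lk (var n * p) b) a"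
        by (rule lk_ellD_high[OF aB])
      also have "(\<lambda>b. lk (var n * p) (b + en)) = (\<lambda>b. lk p b)" by (simp only: varn_high)
      also have "(E ^^ (D - 1)) (\<lambda>b. lk (var n * p) b) a = (E ^^ (D - 1)) (\<lambda>b. 0) a"
        by (rule Epow_cong[OF _ aB]) (simp add: varn_low)
      finally have "0 = (E ^^ D) (\<lambda>b. lk p b) a + of_nat D * (E ^^ (D - 1)) (\<lambda>b. 0) a" .
      then have "0 = (E ^^ D) (\<lambda>b. lk p b) a" by (simp only: Epow_zero mult_zero_right add_0_right)
      then show ?thesis by simp
    qed
    obtain w where w: "\<And>a. inB a \<Longrightarrow> (E ^^ (D - 1)) (\<lambda>b. lk p b) a = (E ^^ D) w a"
      using KL[OF D1 ev low] by blast
    define h2 where "h2 = (\<lambda>b. - of_nat D * w b)"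
    define g where "g = Pf (\<lambda>b. lk p b) + var n * Pf h2"
    have gR: "g \<in> polyR n" unfolding g_def by (intro polyR_add polyR_mult Pf_polyR varn_polyR)
    have glo: "lk g b = lk p b" if "inB b" for b
      unfolding g_def lookup_add Pf_lookup varn_low[OF that] using that by simp
    have ghi: "lk g (b + en) = h2 b" if "inB b" for b
      unfolding g_def lookup_add varn_high Pf_lookup using that not_inB_en[of b] by simp
    have gG: "g \<in> G"
    proof -
      have "g * ?l \<in> ideal_gen n Sp"
      proof (rule J23(2))
        show "g * ?l \<in> polyR n" by (rule polyR_mult[OF gR lR])
      next
        fix a assume aB: "inB a"
        have "lk (g * ?l) a = (E ^^ D) (\<lambda>b. lk g b) a" by (simp only: mult.commute[of g] lk_ellD[OF aB])
        also have "\<dots> = (E ^^ D) (\<lambda>b. lk p b) a" by (rule Epow_cong[OF _ aB]) (simp add: glo)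
        finally show "lk (g * ?l) a = 0" using low[OF aB] by simp
      next
        fix a assume aB: "inB a"
        have "lk (g * ?l) (a + en) = (E ^^ D) (\<lambda>b. lk g (b + en)) a + of_nat D * (E ^^ (D - 1)) (\<lambda>b. lk g b) a"
          by (simp only: mult.commute[of g] lk_ellD_high[OF aB])
        also have "(E ^^ D) (\<lambda>b. lk g (b + en)) a = (E ^^ D) h2 a"
          by (rule Epow_cong[OF _ aB]) (simp add: ghi)
        also have "(E ^^ (D - 1)) (\<lambda>b. lk g b) a = (E ^^ (D - 1)) (\<lambda>b. lk p b) a"
          by (rule Epow_cong[OF _ aB]) (simp add: glo)
        also have "(E ^^ D) h2 a = - of_nat D * (E ^^ D) w a"
          unfolding h2_def lin_smult[OF lin_pow[OF lin_E]] ..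
        finally show "lk (g * ?l) (a + en) = 0" using w[OF aB] by simp
      qed
      then show ?thesis using Gi gR by blast
    qed
    have "p - Pf (\<lambda>b. lk p b) \<in> ideal_plus (ideal_gen n Sp) X"
      unfolding X_def by (rule J23(1)) (auto intro: polyR_diff pR Pf_polyR simp: lookup_minus Pf_lookup)
    then obtain j x where j: "j \<in> ideal_gen n Sp" and x: "x \<in> X" and pe: "p - Pf (\<lambda>b. lk p b) = j + x"
      unfolding ideal_plus_def by blast
    have jR: "j \<in> polyR n" using ig_polyR[OF Sp_polyR] j by blast
    have gjG: "g + j \<in> G"
    proof -
      have "g * ?l + j * ?l \<in> ideal_gen n Sp"
        using gG Gi ig_mult[OF j lR] by (auto intro: ig_add simp: mult.commute)
      then show ?thesis using Gi gR jR by (simp add: distrib_right polyR_add)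
    qed
    have xX: "x - Pf h2 * var n \<in> X"
      unfolding X_def by (rule ig_diff[OF x[unfolded X_def] X_gen[OF Pf_polyR]])
    have "p = (g + j) + (x - Pf h2 * var n)"
      using pe unfolding g_def by (simp add: algebra_simps)
    then show "p \<in> ideal_plus G X" using gjG xX unfolding ideal_plus_def by blast
  qed
  show "ideal_plus G X \<subseteq> ideal_colon n G (var n)"
  proof
    fix p assume "p \<in> ideal_plus G X"
    then obtain a b where a: "a \<in> G" and b: "b \<in> X" and p: "p = a + b" unfolding ideal_plus_def by blast
    obtain c where cR: "c \<in> polyR n" and bc: "b = c * var n" using b unfolding X_def ig_single_iff by blast
    have aR: "a \<in> polyR n" and aJ: "a * ?l \<in> ideal_gen n Sp" using a Gi by auto
    have pR: "p \<in> polyR n" unfolding p bc using aR cR varn_polyR by (auto intro: polyR_add polyR_mult)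
    have "var n * (a * ?l) + (c * ?l) * var n ^ 2 \<in> ideal_gen n Sp"
      by (intro ig_add ig_mult[OF aJ varn_polyR] ig_mult[OF Sp_gen_n2] polyR_mult cR lR)
    moreover have "p * var n * ?l = var n * (a * ?l) + (c * ?l) * var n ^ 2"
      unfolding p bc by (simp add: algebra_simps power2_eq_square)
    ultimately have "p * var n \<in> G" using Gi pR varn_polyR polyR_mult by metis
    then show "p \<in> ideal_colon n G (var n)" using pR unfolding ideal_colon_def by simp
  qed
qed

end



theorem mainTheorem11:
  fixes n :: nat and d :: "nat \<Rightarrow> nat"
  assumes "n \<ge> 1"
    and "\<forall>i\<in>{1..n}. d i > 0"
    and "minimally_generated n
           (map (\<lambda>i. (var i :: 'a::field_char_0 mpoly) ^ d i) [1..<n]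
            @ [var n ^ 2, (\<Sum>i=1..n. var i) ^ d n])"
    and "odd (\<Sum>i=1..n. d i - 1)"
  shows
    "let I = ideal_gen n (((\<lambda>i. (var i :: 'a mpoly) ^ d i) ` {1..<n})
                          \<union> {var n ^ 2, (\<Sum>i=1..n. var i) ^ d n});
         G = ideal_colon n (ideal_gen n (((\<lambda>i. (var i :: 'a mpoly) ^ d i) ` {1..<n})
                                         \<union> {var n ^ 2}))
                          ((\<Sum>i=1..n. var i) ^ d n);
         X = ideal_gen n {var n :: 'a mpoly}
     in ideal_colon n I (var n) = ideal_plus I X
      \<and> ideal_colon n G (var n) = ideal_plus G X"
proof -
  interpret M: mainl n d using assms(1,2) by unfold_locales
  have D1: "1 \<le> d n" using assms(2,1) by (simp add: Suc_le_eq)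
  have split: "(\<Sum>i=1..n. d i - 1) = M.s + (d n - 1)"
  proof -
    have "{1..n} = insert n {1..<n}" using assms(1) by auto
    moreover have s_eq: "M.s = (\<Sum>i\<in>{1..<n}. d i - 1)" by (rule M.s_def)
    ultimately show ?thesis by (simp add: add.commute)
  qed
  have ev: "even (M.s + d n)" using assms(4) D1 unfolding split by presburger
  have S1: "((\<lambda>i. (var i :: 'a mpoly) ^ d i) ` {1..<n}) \<union> {var n ^ 2, (\<Sum>i=1..n. var i) ^ d n}
      = insert ((\<Sum>i=1..n. var i) ^ d n) M.Sp"
    by (auto simp: M.Sp_def)
  have S2: "((\<lambda>i. (var i :: 'a mpoly) ^ d i) ` {1..<n}) \<union> {var n ^ 2} = M.Sp"
    by (simp add: M.Sp_def)
  show ?thesis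
    unfolding Let_def S1 S2
    using M.main_I[OF D1 ev] M.main_G[OF D1 ev] by simp
qed


end
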